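(* Let $Y$ be a Banach space with norm $\|\cdot\|_{y}$, $X\subset Y$ a non-empty set and $\mathcal{T}:X\rightarrow X$ a given operator. Define $X_{\infty}\subset Y$ as the set of all $U\in Y$ for which there exist a sequence $\{U^{k}\}\subset X$ and $V\in Y$ such that $U^{k}\rightarrow U$ and $\mathcal{T}(U^{k})\rightarrow V$ in $Y$. Assume: (i) $\mathcal{T}$ admits a well-defined extension $\widehat{\mathcal{T}}:X_{\infty}\rightarrow Y$ given by $\widehat{\mathcal{T}}(U)=V$, where $V$ is the limit in $Y$ of $\mathcal{T}(U^{k})$ for a sequence $\{U^{k}\}\subset X$ with $U^{k}\rightarrow U$ in $Y$; that is, $V$ is independent of the sequence in $X$ converging to $U$; (ii) there is a constant $0<\alpha_{0}<\frac{1}{2}$ such that for all $U_{1},U_{2}\in X$, $$\|\mathcal{T}^{2}(U_{2})-\mathcal{T}^{2}(U_{1})\|_{y}\leq\alpha_{0}\left\{\|\mathcal{T}(U_{2})-\mathcal{T}(U_{1})\|_{y}+\|U_{2}-U_{1}\|_{y}\right\}.$$ Then $\widehat{\mathcal{T}}(X_{\infty})\subseteq X_{\infty}$, $\widehat{\mathcal{T}}$ satisfies the inequality in (ii) for all $U_{1},U_{2}\in X_{\infty}$, and there is a unique $U_{\infty}\in X_{\infty}$ with $\widehat{\mathcal{T}}(U_{\infty})=U_{\infty}$.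
   Context: This is an abstract metric fixed point theorem; the iteration inequality of type $a_{k}\leq\alpha_{0}(a_{k-1}+a_{k-2})$ with $0<\alpha_{0}<1/2$ implies $\sum_{k}a_{k}<\infty$. *)

theory Defs
  imports "HOL-Analysis.Analysis"
begin

definition X_inf :: "'a::banach set \<Rightarrow> ('a \<Rightarrow> 'a) \<Rightarrow> 'a set" where
  "X_inf X T = {U. \<exists>u V. (\<forall>k. u k \<in> X) \<and> u \<longlonglongrightarrow> U \<and> (\<lambda>k. T (u k)) \<longlonglongrightarrow> V}"

definition T_ext :: "'a::banach set \<Rightarrow> ('a \<Rightarrow> 'a) \<Rightarrow> 'a \<Rightarrow> 'a" where
  "T_ext X T U = (THE V. \<exists>u. (\<forall>k. u k \<in> X) \<and> u \<longlonglongrightarrow> U \<and> (\<lambda>k. T (u k)) \<longlonglongrightarrow> V)"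

end

theory Submission
  imports Defs
begin

lemma geom_bound:
  fixes a :: "nat \<Rightarrow> real" and \<alpha> :: real
  assumes a0: "\<And>k. a k \<ge> 0" and al: "0 < \<alpha>" "\<alpha> < 1/2"
    and rec: "\<And>k. a (Suc (Suc k)) \<le> \<alpha> * (a (Suc k) + a k)"
  shows "a n \<le> max (a 0) (a 1 / (\<alpha> + 1/2)) * (\<alpha> + 1/2) ^ n"
proof -
  define r where "r = \<alpha> + 1/2"
  define M where "M = max (a 0) (a 1 / r)"
  have r: "0 < r" "r < 1" using al by (auto simp: r_def)
  have key: "\<alpha> * (r + 1) \<le> r ^ 2"
  proof -
    have "r^2 - \<alpha> * (r+1) = (1/2 - \<alpha>) / 2" by (simp add: r_def power2_eq_square algebra_simps)
    hence "r^2 - \<alpha> * (r+1) \<ge> 0" using al by simp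
    thus ?thesis by simp
  qed
  have M0: "M \<ge> 0" using a0[of 0] by (auto simp: M_def)
  have "a n \<le> M * r ^ n \<and> a (Suc n) \<le> M * r ^ Suc n"
  proof (induction n)
    case 0
    have "a 1 / r \<le> M" by (simp add: M_def)
    hence "a 1 \<le> M * r" using r by (simp add: divide_le_eq mult.commute)
    then show ?case by (simp add: M_def)
  next
    case (Suc n)
    have "a (Suc (Suc n)) \<le> \<alpha> * (a (Suc n) + a n)" by (rule rec)
    also have "\<dots> \<le> \<alpha> * (M * r ^ Suc n + M * r ^ n)"
      using Suc.IH al by (intro mult_left_mono) auto
    also have "\<dots> = M * r ^ n * (\<alpha> * (r + 1))" by (simp add: algebra_simps)
    also have "\<dots> \<le> M * r ^ n * r ^ 2"
      using key M0 r by (intro mult_left_mono) auto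
    also have "\<dots> = M * r ^ Suc (Suc n)" by (simp add: power2_eq_square)
    finally show ?case using Suc.IH by simp
  qed
  thus ?thesis by (simp add: M_def r_def)
qed

theorem theorem5p1:
  fixes X :: "'a::banach set" and T :: "'a \<Rightarrow> 'a" and \<alpha>\<^sub>0 :: real
  assumes "X \<noteq> {}"
    and "T ` X \<subseteq> X"
    and wd: "\<And>U u v V V'. (\<forall>k. u k \<in> X) \<Longrightarrow> (\<forall>k. v k \<in> X) \<Longrightarrow>
              u \<longlonglongrightarrow> U \<Longrightarrow> v \<longlonglongrightarrow> U \<Longrightarrow>
              (\<lambda>k. T (u k)) \<longlonglongrightarrow> V \<Longrightarrow> (\<lambda>k. T (v k)) \<longlonglongrightarrow> V' \<Longrightarrow> V = V'"
    and "0 < \<alpha>\<^sub>0" and "\<alpha>\<^sub>0 < 1/2"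
    and contr: "\<And>U1 U2. U1 \<in> X \<Longrightarrow> U2 \<in> X \<Longrightarrow>
              norm (T (T U2) - T (T U1)) \<le> \<alpha>\<^sub>0 * (norm (T U2 - T U1) + norm (U2 - U1))"
  shows "T_ext X T ` X_inf X T \<subseteq> X_inf X T \<and>
     (\<forall>U1\<in>X_inf X T. \<forall>U2\<in>X_inf X T.
           norm (T_ext X T (T_ext X T U2) - T_ext X T (T_ext X T U1))
             \<le> \<alpha>\<^sub>0 * (norm (T_ext X T U2 - T_ext X T U1) + norm (U2 - U1))) \<and>
     (\<exists>!Uinf. Uinf \<in> X_inf X T \<and> T_ext X T Uinf = Uinf)"
proof -
  let ?E = "T_ext X T" and ?Xi = "X_inf X T"
  have TX: "\<And>x. x \<in> X \<Longrightarrow> T x \<in> X" using assms(2) by auto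
  have ext: "?E U = V \<and> U \<in> ?Xi" if u: "\<forall>k. u k \<in> X" "u \<longlonglongrightarrow> U" "(\<lambda>k. T (u k)) \<longlonglongrightarrow> V" for U u V
  proof
    show "?E U = V" unfolding T_ext_def
    proof (rule the_equality)
      show "\<exists>u. (\<forall>k. u k \<in> X) \<and> u \<longlonglongrightarrow> U \<and> (\<lambda>k. T (u k)) \<longlonglongrightarrow> V" using u by blast
    next
      fix V' assume "\<exists>v. (\<forall>k. v k \<in> X) \<and> v \<longlonglongrightarrow> U \<and> (\<lambda>k. T (v k)) \<longlonglongrightarrow> V'"
      then obtain v where v: "\<forall>k. v k \<in> X" "v \<longlonglongrightarrow> U" "(\<lambda>k. T (v k)) \<longlonglongrightarrow> V'" by blast
      show "V' = V" by (rule wd[OF v(1) u(1) v(2) u(2) v(3) u(3)])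
    qed
    show "U \<in> ?Xi" unfolding X_inf_def using u by blast
  qed
  have conv2: "convergent (\<lambda>k. T (T (u k)))"
    if u: "\<forall>k. u k \<in> X" "u \<longlonglongrightarrow> U" "(\<lambda>k. T (u k)) \<longlonglongrightarrow> V" for U u V
  proof -
    have c1: "Cauchy u" using u(2) by (rule LIMSEQ_imp_Cauchy)
    have c2: "Cauchy (\<lambda>k. T (u k))" using u(3) by (rule LIMSEQ_imp_Cauchy)
    have "Cauchy (\<lambda>k. T (T (u k)))"
    proof (rule metric_CauchyI)
      fix e :: real assume e: "0 < e"
      obtain M1 where M1: "\<forall>m\<ge>M1. \<forall>n\<ge>M1. dist (u m) (u n) < e"
        using c1 e by (meson metric_CauchyD)
      obtain M2 where M2: "\<forall>m\<ge>M2. \<forall>n\<ge>M2. dist (T (u m)) (T (u n)) < e"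
        using c2 e by (meson metric_CauchyD)
      show "\<exists>M. \<forall>m\<ge>M. \<forall>n\<ge>M. dist (T (T (u m))) (T (T (u n))) < e"
      proof (intro exI allI impI)
        fix m n assume mn: "max M1 M2 \<le> m" "max M1 M2 \<le> n"
        have d1: "norm (u m - u n) < e" using M1 mn by (simp add: dist_norm)
        have d2: "norm (T (u m) - T (u n)) < e" using M2 mn by (simp add: dist_norm)
        have "dist (T (T (u m))) (T (T (u n))) \<le> \<alpha>\<^sub>0 * (norm (T (u m) - T (u n)) + norm (u m - u n))"
          using contr[of "u n" "u m"] u(1) by (simp add: dist_norm)
        also have "\<dots> \<le> \<alpha>\<^sub>0 * (e + e)" using d1 d2 assms(4) by (intro mult_left_mono) auto
        also have "\<dots> < e" using assms(5) e by (simp add: algebra_simps)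
        finally show "dist (T (T (u m))) (T (T (u n))) < e" .
      qed
    qed
    thus ?thesis by (simp add: Cauchy_convergent_iff)
  qed
  have step: "?E U \<in> ?Xi \<and> (\<lambda>k. T (T (u k))) \<longlonglongrightarrow> ?E (?E U) \<and> (\<lambda>k. T (u k)) \<longlonglongrightarrow> ?E U"
    if u: "\<forall>k. u k \<in> X" "u \<longlonglongrightarrow> U" "(\<lambda>k. T (u k)) \<longlonglongrightarrow> V" for U u V
  proof -
    obtain W where W: "(\<lambda>k. T (T (u k))) \<longlonglongrightarrow> W" using conv2[OF u] by (auto simp: convergent_def)
    have EU: "?E U = V" using ext[OF u] by blast
    have tu: "\<forall>k. T (u k) \<in> X" using u(1) TX by blast
    have "?E V = W \<and> V \<in> ?Xi" using ext[OF tu u(3) W] .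
    thus ?thesis using EU W u(3) by simp
  qed
  have P1: "?E ` ?Xi \<subseteq> ?Xi"
  proof
    fix y assume "y \<in> ?E ` ?Xi"
    then obtain U where U: "U \<in> ?Xi" "y = ?E U" by blast
    then obtain u V where "\<forall>k. u k \<in> X" "u \<longlonglongrightarrow> U" "(\<lambda>k. T (u k)) \<longlonglongrightarrow> V"
      unfolding X_inf_def by blast
    with step[of u U V] U show "y \<in> ?Xi" by simp
  qed
  have P2: "norm (?E (?E U2) - ?E (?E U1)) \<le> \<alpha>\<^sub>0 * (norm (?E U2 - ?E U1) + norm (U2 - U1))"
    if UU: "U1 \<in> ?Xi" "U2 \<in> ?Xi" for U1 U2
  proof -
    obtain u V where u: "\<forall>k. u k \<in> X" "u \<longlonglongrightarrow> U1" "(\<lambda>k. T (u k)) \<longlonglongrightarrow> V"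
      using UU(1) unfolding X_inf_def by blast
    obtain v W where v: "\<forall>k. v k \<in> X" "v \<longlonglongrightarrow> U2" "(\<lambda>k. T (v k)) \<longlonglongrightarrow> W"
      using UU(2) unfolding X_inf_def by blast
    note su = step[OF u] and sv = step[OF v]
    have l1: "(\<lambda>k. norm (T (T (v k)) - T (T (u k)))) \<longlonglongrightarrow> norm (?E (?E U2) - ?E (?E U1))"
      using su sv by (intro tendsto_intros) auto
    have l2: "(\<lambda>k. \<alpha>\<^sub>0 * (norm (T (v k) - T (u k)) + norm (v k - u k))) \<longlonglongrightarrow>
        \<alpha>\<^sub>0 * (norm (?E U2 - ?E U1) + norm (U2 - U1))"
      using su sv u v by (intro tendsto_intros) auto
    show ?thesis
      by (rule LIMSEQ_le[OF l1 l2]) (use u v contr in auto)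
  qed
  obtain x0 where x0: "x0 \<in> X" using assms(1) by blast
  define x where "x n = (T ^^ n) x0" for n
  have xX: "x n \<in> X" for n by (induction n) (auto simp: x_def x0 TX)
  have xS: "x (Suc n) = T (x n)" for n by (simp add: x_def)
  define a where "a k = norm (x (Suc k) - x k)" for k
  have arec: "a (Suc (Suc k)) \<le> \<alpha>\<^sub>0 * (a (Suc k) + a k)" for k
    using contr[OF xX[of k] xX[of "Suc k"]] by (simp add: a_def xS)
  define M where "M = max (a 0) (a 1 / (\<alpha>\<^sub>0 + 1/2))"
  have abd: "a n \<le> M * (\<alpha>\<^sub>0 + 1/2) ^ n" for n
    unfolding M_def by (rule geom_bound[of a, OF _ assms(4,5) arec]) (simp add: a_def)
  have "summable (\<lambda>n. M * (\<alpha>\<^sub>0 + 1/2) ^ n)"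
    using assms(4,5) by (intro summable_mult summable_geometric) auto
  hence sd: "summable (\<lambda>k. x (Suc k) - x k)"
    by (rule summable_comparison_test'[where N=0]) (use abd in \<open>auto simp: a_def\<close>)
  have "(\<lambda>n. \<Sum>k<n. x (Suc k) - x k) \<longlonglongrightarrow> suminf (\<lambda>k. x (Suc k) - x k)"
    using sd by (rule summable_LIMSEQ)
  hence "(\<lambda>n. x n - x 0) \<longlonglongrightarrow> suminf (\<lambda>k. x (Suc k) - x k)"
    by (simp add: sum_lessThan_telescope)
  hence "(\<lambda>n. x n - x 0 + x 0) \<longlonglongrightarrow> suminf (\<lambda>k. x (Suc k) - x k) + x 0"
    by (intro tendsto_intros)
  then obtain L where L: "x \<longlonglongrightarrow> L" by auto
  have "(\<lambda>n. T (x n)) \<longlonglongrightarrow> L"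
    using L[THEN LIMSEQ_Suc] by (simp add: xS)
  hence fix1: "?E L = L \<and> L \<in> ?Xi" using ext[of x L L] L xX by simp
  have uniq: "U = W" if "U \<in> ?Xi" "?E U = U" "W \<in> ?Xi" "?E W = W" for U W
  proof -
    have "norm (U - W) \<le> \<alpha>\<^sub>0 * (norm (U - W) + norm (U - W))"
      using P2[OF that(3) that(1)] that(2,4) by simp
    hence "(1 - 2 * \<alpha>\<^sub>0) * norm (U - W) \<le> 0" by (simp add: algebra_simps)
    hence "norm (U - W) \<le> 0" using assms(5)
      by (simp add: mult_le_0_iff)
    thus ?thesis by simp
  qed
  have P3: "\<exists>!Uinf. Uinf \<in> ?Xi \<and> ?E Uinf = Uinf"
    by (rule ex1I[of _ L]) (use fix1 uniq in auto)
  show ?thesis using P1 P2 P3 by blast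
qed

end
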